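(* Let $\overrightarrow{W}$ be a Morse sequence on a simplicial complex $K$. Then for every integer $p\ge0$, the complex $W^-_{p+1}$ collapses onto $W^+_p$.
   Context: A simplicial complex $K$ is a finite collection of non-empty finite sets closed under taking non-empty subsets; $\dim\sigma=|\sigma|-1$. A pair $(\sigma,\tau)$ with $\sigma\subsetneq\tau$ is a free pair for $K$ if $\tau$ is the only simplex other than $\sigma$ containing $\sigma$; then $K\setminus\{\sigma,\tau\}$ is an elementary collapse of $K$ and $K$ an elementary expansion of $K\setminus\{\sigma,\tau\}$. $K$ collapses onto $L$ if there is a sequence $\langle K=L_0,\dots,L_m=L\rangle$, $m\ge0$, with each $L_j$ an elementary collapse of $L_{j-1}$. If $\nu$ is a facet (maximal simplex) of $K$, $K$ is an elementary filling of $K\setminus\{\nu\}$. A Morse sequence on $K$ is a sequence $\langle\emptyset=K_0,\dots,K_k=K\rangle$ with each $K_i$ an elementary expansion or filling of $K_{i-1}$; simplices added by fillings are critical; for an expansion $K_i=K_{i-1}\cup\{\sigma,\tau\}$, $\sigma\subset\tau$, $\sigma$ is lower regular and $\tau$ upper regular. Writing $\widehat W,\underline W,\overline W$ for the sets of critical, lower regular and upper regular simplices, the lower and upper $p$-skeletons are $W^-_p=\{\nu\in\overline W:\dim\nu\le p\}\cup\{\nu\in\widehat W\cup\underline W:\dim\nu\le p-1\}$ and $W^+_p=\{\nu\in\widehat W\cup\overline W:\dim\nu\le p\}\cup\{\nu\in\underline W:\dim\nu\le p-1\}$ (these are simplicial complexes). *)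

theory Defs
  imports Main
begin

definition simplicial_complex :: "'a set set \<Rightarrow> bool" where
  "simplicial_complex K \<longleftrightarrow> finite K \<and>
     (\<forall>\<sigma>\<in>K. \<sigma> \<noteq> {} \<and> finite \<sigma>) \<and>
     (\<forall>\<sigma>\<in>K. \<forall>\<tau>. \<tau> \<subseteq> \<sigma> \<and> \<tau> \<noteq> {} \<longrightarrow> \<tau> \<in> K)"

definition sdim :: "'a set \<Rightarrow> int" where
  "sdim \<sigma> = int (card \<sigma>) - 1"

definition free_pair :: "'a set set \<Rightarrow> 'a set \<Rightarrow> 'a set \<Rightarrow> bool" where
  "free_pair K \<sigma> \<tau> \<longleftrightarrow> \<sigma> \<in> K \<and> \<tau> \<in> K \<and> \<sigma> \<subset> \<tau> \<and>
     (\<forall>\<nu>\<in>K. \<sigma> \<subseteq> \<nu> \<longrightarrow> \<nu> = \<sigma> \<or> \<nu> = \<tau>)"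

definition elem_collapse :: "'a set set \<Rightarrow> 'a set set \<Rightarrow> bool" where
  "elem_collapse K L \<longleftrightarrow> (\<exists>\<sigma> \<tau>. free_pair K \<sigma> \<tau> \<and> L = K - {\<sigma>, \<tau>})"

definition collapses_onto :: "'a set set \<Rightarrow> 'a set set \<Rightarrow> bool" where
  "collapses_onto K L \<longleftrightarrow> elem_collapse\<^sup>*\<^sup>* K L"

definition facet :: "'a set set \<Rightarrow> 'a set \<Rightarrow> bool" where
  "facet K \<nu> \<longleftrightarrow> \<nu> \<in> K \<and> (\<forall>\<mu>\<in>K. \<nu> \<subseteq> \<mu> \<longrightarrow> \<mu> = \<nu>)"

definition expansion_step :: "'a set set \<Rightarrow> 'a set set \<Rightarrow> 'a set \<Rightarrow> 'a set \<Rightarrow> bool" where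
  "expansion_step K K' \<sigma> \<tau> \<longleftrightarrow> free_pair K' \<sigma> \<tau> \<and> K = K' - {\<sigma>, \<tau>}"

definition filling_step :: "'a set set \<Rightarrow> 'a set set \<Rightarrow> 'a set \<Rightarrow> bool" where
  "filling_step K K' \<nu> \<longleftrightarrow> facet K' \<nu> \<and> K = K' - {\<nu>}"

definition morse_sequence :: "'a set set list \<Rightarrow> 'a set set \<Rightarrow> bool" where
  "morse_sequence W K \<longleftrightarrow> W \<noteq> [] \<and> hd W = {} \<and> last W = K \<and>
     (\<forall>i<length W. simplicial_complex (W ! i)) \<and>
     (\<forall>i. Suc i < length W \<longrightarrow>
        (\<exists>\<sigma> \<tau>. expansion_step (W ! i) (W ! Suc i) \<sigma> \<tau>) \<or>
        (\<exists>\<nu>. filling_step (W ! i) (W ! Suc i) \<nu>))"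

definition critical :: "'a set set list \<Rightarrow> 'a set set" where
  "critical W = {\<nu>. \<exists>i. Suc i < length W \<and> filling_step (W ! i) (W ! Suc i) \<nu>}"

definition lower_regular :: "'a set set list \<Rightarrow> 'a set set" where
  "lower_regular W = {\<sigma>. \<exists>i \<tau>. Suc i < length W \<and> expansion_step (W ! i) (W ! Suc i) \<sigma> \<tau>}"

definition upper_regular :: "'a set set list \<Rightarrow> 'a set set" where
  "upper_regular W = {\<tau>. \<exists>i \<sigma>. Suc i < length W \<and> expansion_step (W ! i) (W ! Suc i) \<sigma> \<tau>}"

definition lower_skeleton :: "'a set set list \<Rightarrow> int \<Rightarrow> 'a set set" where
  "lower_skeleton W p =
     {\<nu> \<in> upper_regular W. sdim \<nu> \<le> p} \<union>
     {\<nu> \<in> critical W \<union> lower_regular W. sdim \<nu> \<le> p - 1}"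

definition upper_skeleton :: "'a set set list \<Rightarrow> int \<Rightarrow> 'a set set" where
  "upper_skeleton W p =
     {\<nu> \<in> critical W \<union> upper_regular W. sdim \<nu> \<le> p} \<union>
     {\<nu> \<in> lower_regular W. sdim \<nu> \<le> p - 1}"

end

theory Submission
  imports Defs
begin

lemma exp_facts:
  assumes "expansion_step A B s t"
  shows "B = A \<union> {s,t}" "s \<notin> A" "t \<notin> A" "s \<subset> t" "s \<in> B" "t \<in> B"
  using assms unfolding expansion_step_def free_pair_def by auto

lemma fill_facts:
  assumes "filling_step A B v"
  shows "B = A \<union> {v}" "v \<notin> A" "v \<in> B"
  using assms unfolding filling_step_def facet_def by auto

lemma exp_card:
  assumes "expansion_step A B s t" "simplicial_complex B"
  shows "card t = Suc (card s)"
proof -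
  have fp: "free_pair B s t" using assms(1) unfolding expansion_step_def by blast
  hence fpd: "s \<in> B \<and> t \<in> B \<and> s \<subset> t \<and> (\<forall>\<nu>\<in>B. s \<subseteq> \<nu> \<longrightarrow> \<nu> = s \<or> \<nu> = t)"
    unfolding free_pair_def .
  have st: "s \<subset> t" "t \<in> B" "s \<in> B" using fpd by blast+
  have fr: "\<forall>\<nu>\<in>B. s \<subseteq> \<nu> \<longrightarrow> \<nu> = s \<or> \<nu> = t" using fpd by blast
  have sc: "finite B \<and> (\<forall>\<sigma>\<in>B. \<sigma> \<noteq> {} \<and> finite \<sigma>) \<and> (\<forall>\<sigma>\<in>B. \<forall>\<tau>. \<tau> \<subseteq> \<sigma> \<and> \<tau> \<noteq> {} \<longrightarrow> \<tau> \<in> B)"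
    using assms(2) unfolding simplicial_complex_def .
  have cl: "\<And>\<sigma> \<tau>. \<sigma> \<in> B \<Longrightarrow> \<tau> \<subseteq> \<sigma> \<Longrightarrow> \<tau> \<noteq> {} \<Longrightarrow> \<tau> \<in> B"
    using sc by blast
  have ft: "finite t" using sc st(2) by blast
  obtain x where x: "x \<in> t" "x \<notin> s" using st(1) by blast
  have sub: "insert x s \<subseteq> t" using x st(1) by blast
  have xB: "insert x s \<in> B" using cl[OF st(2) sub] by blast
  have "s \<subseteq> insert x s" by blast
  hence "insert x s = s \<or> insert x s = t" using fr xB by blast
  hence ins: "insert x s = t" using x by blast
  have fs: "finite s" using ft st(1) finite_subset by blast
  have "card t = card (insert x s)" using ins by simp
  also have "\<dots> = Suc (card s)" using fs x(2) by simp
  finally show ?thesis .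
qed

lemma ms_step:
  assumes "morse_sequence W K" "Suc i < length W"
  shows "(\<exists>\<sigma> \<tau>. expansion_step (W ! i) (W ! Suc i) \<sigma> \<tau>) \<or> (\<exists>\<nu>. filling_step (W ! i) (W ! Suc i) \<nu>)"
  using assms unfolding morse_sequence_def by blast

lemma ms_sub:
  assumes "morse_sequence W K" "Suc i < length W"
  shows "W ! i \<subseteq> W ! Suc i"
  using ms_step[OF assms] exp_facts(1) fill_facts(1) by blast

lemma ms_mono:
  assumes "morse_sequence W K" "i \<le> j" "j < length W"
  shows "W ! i \<subseteq> W ! j"
  using assms(2,3)
proof (induction j rule: dec_induct)
  case base then show ?case by simp
next
  case (step n) then show ?case using ms_sub[OF assms(1), of n] by auto
qed

lemma ms_unique:
  assumes "morse_sequence W K" "Suc i < length W" "Suc j < length W"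
    "v \<in> W ! Suc i" "v \<notin> W ! i" "v \<in> W ! Suc j" "v \<notin> W ! j"
  shows "i = j"
proof (rule ccontr)
  assume "i \<noteq> j"
  then consider "Suc i \<le> j" | "Suc j \<le> i" by linarith
  then show False
  proof cases
    case 1 then show ?thesis using ms_mono[OF assms(1) 1] assms by auto
  next
    case 2 then show ?thesis using ms_mono[OF assms(1) 2] assms by auto
  qed
qed

lemma ms_sc:
  assumes "morse_sequence W K" "i < length W"
  shows "simplicial_complex (W ! i)"
  using assms unfolding morse_sequence_def by blast

lemma fill_exp_clash:
  assumes "filling_step A B v" "expansion_step A B s t"
  shows False
proof -
  note F = fill_facts[OF assms(1)]
  note E = exp_facts[OF assms(2)]
  have "s = v" using E(2) E(5) F(1) by blast
  moreover have "t = v" using E(3) E(6) F(1) by blast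
  ultimately show False using E(4) by blast
qed

lemma exp_exp:
  assumes "expansion_step A B s t" "expansion_step A B s' t'"
  shows "s' = s \<and> t' = t"
proof -
  note E = exp_facts[OF assms(1)]
  note E2 = exp_facts[OF assms(2)]
  have s': "s' = s \<or> s' = t" using E2(2) E2(5) E(1) by blast
  have t': "t' = s \<or> t' = t" using E2(3) E2(6) E(1) by blast
  show ?thesis
  proof (cases "s' = s")
    case True
    then show ?thesis using t' E2(4) by blast
  next
    case False
    hence "s' = t" using s' by blast
    moreover have "t' = s" using t' E2(4) \<open>s' = t\<close> by blast
    ultimately show ?thesis using E(4) E2(4) by blast
  qed
qed

lemma fill_not_low_up:
  assumes M: "morse_sequence W K" and j: "Suc j < length W"
    and f: "filling_step (W ! j) (W ! Suc j) v"
  shows "v \<notin> lower_regular W" "v \<notin> upper_regular W"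
proof -
  note F = fill_facts[OF f]
  show "v \<notin> lower_regular W"
  proof
    assume "v \<in> lower_regular W"
    then obtain i t where i: "Suc i < length W" "expansion_step (W ! i) (W ! Suc i) v t"
      unfolding lower_regular_def by blast
    note E = exp_facts[OF i(2)]
    have "i = j" using ms_unique[OF M i(1) j E(5) E(2) F(3) F(2)] .
    then show False using fill_exp_clash[OF f] i(2) by simp
  qed
  show "v \<notin> upper_regular W"
  proof
    assume "v \<in> upper_regular W"
    then obtain i s where i: "Suc i < length W" "expansion_step (W ! i) (W ! Suc i) s v"
      unfolding upper_regular_def by blast
    note E = exp_facts[OF i(2)]
    have "i = j" using ms_unique[OF M i(1) j E(6) E(3) F(3) F(2)] .
    then show False using fill_exp_clash[OF f] i(2) by simp
  qed
qed

lemma exp_not: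
  assumes M: "morse_sequence W K" and j: "Suc j < length W"
    and e: "expansion_step (W ! j) (W ! Suc j) s t"
  shows "s \<notin> critical W" "s \<notin> upper_regular W" "t \<notin> lower_regular W"
proof -
  note E = exp_facts[OF e]
  show "s \<notin> critical W"
  proof
    assume "s \<in> critical W"
    then obtain i where i: "Suc i < length W" "filling_step (W ! i) (W ! Suc i) s"
      unfolding critical_def by blast
    note F = fill_facts[OF i(2)]
    have "i = j" using ms_unique[OF M i(1) j F(3) F(2) E(5) E(2)] .
    then show False using fill_exp_clash[OF _ e] i(2) by simp
  qed
  show "s \<notin> upper_regular W"
  proof
    assume "s \<in> upper_regular W"
    then obtain i s' where i: "Suc i < length W" "expansion_step (W ! i) (W ! Suc i) s' s"
      unfolding upper_regular_def by blast
    note E2 = exp_facts[OF i(2)]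
    have "i = j" using ms_unique[OF M i(1) j E2(6) E2(3) E(5) E(2)] .
    hence "expansion_step (W ! j) (W ! Suc j) s' s" using i(2) by simp
    from exp_exp[OF e this] have "s = t" by blast
    then show False using E(4) by blast
  qed
  show "t \<notin> lower_regular W"
  proof
    assume "t \<in> lower_regular W"
    then obtain i t' where i: "Suc i < length W" "expansion_step (W ! i) (W ! Suc i) t t'"
      unfolding lower_regular_def by blast
    note E2 = exp_facts[OF i(2)]
    have "i = j" using ms_unique[OF M i(1) j E2(5) E2(2) E(6) E(3)] .
    hence "expansion_step (W ! j) (W ! Suc j) t t'" using i(2) by simp
    from exp_exp[OF e this] have "t = s" by blast
    then show False using E(4) by blast
  qed
qed

theorem theorem6:
  fixes W :: "'a set set list" and K :: "'a set set" and p :: int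
  assumes "morse_sequence W K" and "p \<ge> 0"
  shows "collapses_onto (lower_skeleton W (p + 1)) (upper_skeleton W p)"
proof -
  note M = assms(1)
  define S where "S = {\<nu> \<in> lower_regular W. sdim \<nu> = p} \<union> {\<nu> \<in> upper_regular W. sdim \<nu> = p + 1}"
  define L where "L j = upper_skeleton W p \<union> (S \<inter> W ! j)" for j
  have ne: "W \<noteq> []" and h0: "W ! 0 = {}" and lst: "W ! (length W - 1) = K"
    using M unfolding morse_sequence_def by (auto simp: hd_conv_nth last_conv_nth)
  have L0: "L 0 = upper_skeleton W p" unfolding L_def using h0 by simp
  have SK: "S \<subseteq> W ! (length W - 1)"
  proof
    fix v assume "v \<in> S"
    then have "v \<in> lower_regular W \<or> v \<in> upper_regular W" unfolding S_def by blast
    then obtain i s t where i: "Suc i < length W" "expansion_step (W ! i) (W ! Suc i) s t"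
      "v = s \<or> v = t"
      unfolding lower_regular_def upper_regular_def by blast
    have "v \<in> W ! Suc i" using exp_facts[OF i(2)] i(3) by blast
    moreover have "W ! Suc i \<subseteq> W ! (length W - 1)" using ms_mono[OF M, of "Suc i" "length W - 1"] i(1) by simp
    ultimately show "v \<in> W ! (length W - 1)" by blast
  qed
  have Ln: "L (length W - 1) = lower_skeleton W (p + 1)"
  proof -
    have "L (length W - 1) = upper_skeleton W p \<union> S" unfolding L_def using SK by blast
    also have "\<dots> = lower_skeleton W (p + 1)"
      unfolding upper_skeleton_def lower_skeleton_def S_def by auto
    finally show ?thesis .
  qed
  have step: "elem_collapse\<^sup>*\<^sup>* (L (Suc j)) (L j)" if j: "Suc j < length W" for j
  proof -
    consider s t where "expansion_step (W ! j) (W ! Suc j) s t" | v where "filling_step (W ! j) (W ! Suc j) v"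
      using ms_step[OF M j] by blast
    then show ?thesis
    proof cases
      case (2 v)
      note F = fill_facts[OF 2]
      have "v \<notin> S" using fill_not_low_up[OF M j 2] unfolding S_def by blast
      hence "L (Suc j) = L j" unfolding L_def using F(1) by blast
      thus ?thesis by simp
    next
      case (1 s t)
      note E = exp_facts[OF 1]
      note N = exp_not[OF M j 1]
      have sc: "simplicial_complex (W ! Suc j)" using ms_sc[OF M j] .
      have scj: "simplicial_complex (W ! j)" using ms_sc[OF M] j by simp
      have ct: "card t = Suc (card s)" using exp_card[OF 1 sc] .
      have sdt: "sdim t = sdim s + 1" unfolding sdim_def using ct by simp
      have sl: "s \<in> lower_regular W" and tu: "t \<in> upper_regular W"
        unfolding lower_regular_def upper_regular_def using j 1 by blast+
      show ?thesis
      proof (cases "sdim s = p")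
        case False
        hence "s \<notin> S" "t \<notin> S" unfolding S_def using N sdt by auto
        hence "L (Suc j) = L j" unfolding L_def using E(1) by blast
        thus ?thesis by simp
      next
        case True
        hence sS: "s \<in> S" "t \<in> S" unfolding S_def using sl tu sdt by auto
        have sU: "s \<notin> upper_skeleton W p" unfolding upper_skeleton_def using N True by auto
        have tU: "t \<notin> upper_skeleton W p" unfolding upper_skeleton_def using True sdt by auto
        have LS: "L (Suc j) = L j \<union> {s, t}" unfolding L_def using E(1) sS by blast
        have Lj: "L j = L (Suc j) - {s, t}" unfolding L_def using E sU tU by blast
        have sne: "s \<noteq> {}" using sc E(5) unfolding simplicial_complex_def by blast
        have fs: "finite s" using sc E(5) unfolding simplicial_complex_def by blast
        have fp: "free_pair (L (Suc j)) s t"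
          unfolding free_pair_def
        proof (intro conjI ballI impI)
          show "s \<in> L (Suc j)" "t \<in> L (Suc j)" using LS by auto
          show "s \<subset> t" using E(4) .
          fix v assume v: "v \<in> L (Suc j)" "s \<subseteq> v"
          show "v = s \<or> v = t"
          proof (rule ccontr)
            assume nv: "\<not> (v = s \<or> v = t)"
            hence vj: "v \<in> L j" using LS v by blast
            show False
            proof (cases "v \<in> W ! j")
              case True
              hence "s \<in> W ! j" using scj v(2) sne unfolding simplicial_complex_def by blast
              thus False using E(2) by blast
            next
              case False
              hence vU: "v \<in> upper_skeleton W p" using vj unfolding L_def by blast
              hence "sdim v \<le> p" unfolding upper_skeleton_def by auto
              have "v \<in> critical W \<union> upper_regular W \<union> lower_regular W"
                using vU unfolding upper_skeleton_def by blast
              then obtain i where i: "Suc i < length W" "v \<in> W ! Suc i"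
              proof (elim UnE)
                assume "v \<in> critical W"
                then obtain i where "Suc i < length W" "filling_step (W ! i) (W ! Suc i) v"
                  unfolding critical_def by blast
                then show ?thesis using that fill_facts(3) by blast
              next
                assume "v \<in> upper_regular W"
                then obtain i s' where "Suc i < length W" "expansion_step (W ! i) (W ! Suc i) s' v"
                  unfolding upper_regular_def by blast
                then show ?thesis using that exp_facts(6) by blast
              next
                assume "v \<in> lower_regular W"
                then obtain i t' where "Suc i < length W" "expansion_step (W ! i) (W ! Suc i) v t'"
                  unfolding lower_regular_def by blast
                then show ?thesis using that exp_facts(5) by blast
              qed
              have "finite v" using ms_sc[OF M i(1)] i(2) unfolding simplicial_complex_def by blast
              moreover have "s \<subset> v" using v(2) nv by blast
              ultimately have "card s < card v" by (simp add: psubset_card_mono)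
              hence "sdim s < sdim v" unfolding sdim_def by simp
              thus False using True \<open>sdim v \<le> p\<close> by simp
            qed
          qed
        qed
        have "elem_collapse (L (Suc j)) (L j)" unfolding elem_collapse_def using fp Lj by blast
        thus ?thesis by simp
      qed
    qed
  qed
  have all: "elem_collapse\<^sup>*\<^sup>* (L j) (L 0)" if "j < length W" for j
    using that
  proof (induction j)
    case 0 then show ?case by simp
  next
    case (Suc j)
    then show ?case using step[of j] by (meson Suc_lessD rtranclp_trans)
  qed
  have "length W - 1 < length W" using ne by simp
  from all[OF this] have "elem_collapse\<^sup>*\<^sup>* (L (length W - 1)) (L 0)" .
  then have "elem_collapse\<^sup>*\<^sup>* (lower_skeleton W (p + 1)) (upper_skeleton W p)"
    by (simp only: Ln L0)
  then show ?thesis unfolding collapses_onto_def .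
qed

end
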